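(* For a positive integer $n$ and nonnegative integers $r,s,m$, \begin{multline*} \int_0^{\infty} \cdots \int_0^{\infty} \prod_{i=1}^n (t_0 + t_{1} +\dots + t_{i-1})^r (t_i + t_{i+1} +\dots + t_{n})^s \prod_{1\le i<j\le n} (t_i + t_{i+1} +\dots + t_{j-1})^m\, e^{-t_0-t_1-\dots-t_{n}}\, dt_0\, dt_1 \cdots dt_{n}\\ =\frac{((r+s+1)n+mn(n-1)/2)!}{n!} \int_0^1\cdots\int_0^1 \prod_{i=1}^n x_i^r (1-x_i)^s \prod_{1\le i<j\le n} |x_i-x_j|^{m}\, dx_1\cdots dx_n. \end{multline*} *)

theory Defs
  imports "HOL-Analysis.Analysis"
begin

end

theory Submission
  imports Defs "HOL-Probability.Probability" "HOL-Combinatorics.Permutations"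
begin

abbreviation PL :: "nat set \<Rightarrow> (nat \<Rightarrow> real) measure" where
  "PL I \<equiv> Pi\<^sub>M I (\<lambda>_. lborel)"

interpretation PLB: product_sigma_finite "\<lambda>_::nat. lborel :: real measure"
  unfolding product_sigma_finite_def by (simp add: lborel.sigma_finite_measure_axioms)

lemma upd_meas[measurable (raw)]:
  assumes k: "k \<in> I" and g[measurable]: "g \<in> borel_measurable (PL I)"
  shows "(\<lambda>x. x(k := g x)) \<in> measurable (PL I) (PL I)"
proof -
  have "(\<lambda>\<omega> i. (\<lambda>i \<omega>. if i = k then g \<omega> else \<omega> i) i \<omega>) \<in> measurable (PL I) (PL I)"
  proof (rule measurable_PiM_single')
    fix i assume "i \<in> I" thus "(\<lambda>\<omega>. if i = k then g \<omega> else \<omega> i) \<in> measurable (PL I) lborel"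
      apply (cases "i = k")
      apply simp
      using \<open>i \<in> I\<close> by (simp add: measurable_component_singleton)
  next
    show "(\<lambda>\<omega> i. if i = k then g \<omega> else \<omega> i) \<in> space (PL I) \<rightarrow> (\<Pi>\<^sub>E i\<in>I. space lborel)"
      using k by (auto simp: space_PiM PiE_def extensional_def)
  qed
  moreover have "(\<lambda>\<omega> i. (\<lambda>i \<omega>. if i = k then g \<omega> else \<omega> i) i \<omega>) = (\<lambda>x. x(k := g x))"
    by (auto simp: fun_eq_iff)
  ultimately show ?thesis by simp
qed

lemma coord_affine:
  assumes fin: "finite I" and k: "k \<in> I"
    and f[measurable]: "f \<in> borel_measurable (PL I)"
    and a[measurable]: "a \<in> borel_measurable (PL I)"
    and b[measurable]: "b \<in> borel_measurable (PL I)"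
    and inda: "\<And>x y. a (x(k:=y)) = a x" and indb: "\<And>x y. b (x(k:=y)) = b x"
    and bpos: "\<And>x. b x > 0"
  shows "(\<integral>\<^sup>+x. f (x(k := a x + b x * x k)) * ennreal (b x) \<partial>PL I) = (\<integral>\<^sup>+x. f x \<partial>PL I)"
proof -
  have I: "I = insert k (I - {k})" using k by auto
  have fin': "finite (I - {k})" "k \<notin> I - {k}" using fin by auto
  have m1: "(\<lambda>x. f (x(k := a x + b x * x k)) * ennreal (b x)) \<in> borel_measurable (PL I)"
    using k by measurable
  have "(\<integral>\<^sup>+x. f (x(k := a x + b x * x k)) * ennreal (b x) \<partial>PL I)
     = (\<integral>\<^sup>+x. \<integral>\<^sup>+y. f ((x(k:=y))(k := a (x(k:=y)) + b (x(k:=y)) * (x(k:=y)) k)) * ennreal (b (x(k:=y))) \<partial>lborel \<partial>PL (I - {k}))"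
    using PLB.product_nn_integral_insert[OF fin', of "\<lambda>x. f (x(k := a x + b x * x k)) * ennreal (b x)"] m1 I
    by simp
  also have "\<dots> = (\<integral>\<^sup>+x. \<integral>\<^sup>+y. f (x(k:=y)) \<partial>lborel \<partial>PL (I - {k}))"
  proof (rule nn_integral_cong)
    fix x assume x: "x \<in> space (PL (I - {k}))"
    have mf: "(\<lambda>y. f (x(k:=y))) \<in> borel_measurable borel"
      using measurable_comp[OF measurable_component_update[OF x fin'(2)], of f "borel"] I f
      by (simp add: comp_def)
    have "(\<integral>\<^sup>+y. f ((x(k:=y))(k := a (x(k:=y)) + b (x(k:=y)) * (x(k:=y)) k)) * ennreal (b (x(k:=y))) \<partial>lborel)
       = (\<integral>\<^sup>+y. f (x(k := a x + b x * y)) * ennreal (b x) \<partial>lborel)"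
      by (simp add: inda indb)
    also have "\<dots> = ennreal (b x) * (\<integral>\<^sup>+y. f (x(k := a x + b x * y)) \<partial>lborel)"
      by (subst nn_integral_multc) (use mf in \<open>auto simp: mult.commute\<close>)
    also have "\<dots> = (\<integral>\<^sup>+y. f (x(k:=y)) \<partial>lborel)"
      using nn_integral_real_affine[OF mf, of "b x" "a x"] bpos[of x] by simp
    finally show "(\<integral>\<^sup>+y. f ((x(k:=y))(k := a (x(k:=y)) + b (x(k:=y)) * (x(k:=y)) k)) * ennreal (b (x(k:=y))) \<partial>lborel)
       = (\<integral>\<^sup>+y. f (x(k:=y)) \<partial>lborel)" .
  qed
  also have "\<dots> = (\<integral>\<^sup>+x. f x \<partial>PL I)"
    using PLB.product_nn_integral_insert[OF fin', of f] I f by simp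
  finally show ?thesis .
qed

definition Ssh :: "nat \<Rightarrow> (nat \<Rightarrow> real) \<Rightarrow> nat \<Rightarrow> real" where
  "Ssh k x = (\<lambda>i. if i \<le> k then (\<Sum>j=0..i. x j) else x i)"

lemma Ssh_Suc: "Ssh (Suc k) x = (Ssh k x)(Suc k := Ssh k x (Suc k) + Ssh k x k)"
  by (auto simp: Ssh_def fun_eq_iff)

lemma shear_all:
  assumes h[measurable]: "h \<in> borel_measurable (PL {0..n})" and "k \<le> n"
  shows "(\<integral>\<^sup>+x. h (Ssh k x) \<partial>PL {0..n}) = (\<integral>\<^sup>+x. h x \<partial>PL {0..n})"
  using assms
proof (induction k arbitrary: h)
  case 0
  have "Ssh 0 x = x" for x by (auto simp: Ssh_def fun_eq_iff)
  then show ?case by simp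
next
  case (Suc k)
  note [measurable] = Suc.prems(1)
  have kI: "Suc k \<in> {0..n}" and kI': "k \<in> {0..n}" using Suc.prems by auto
  have mA: "(\<lambda>x. h (x(Suc k := x (Suc k) + x k))) \<in> borel_measurable (PL {0..n})"
    using kI kI' Suc.prems by measurable
  have "(\<integral>\<^sup>+x. h (Ssh (Suc k) x) \<partial>PL {0..n}) = (\<integral>\<^sup>+x. (\<lambda>x. h (x(Suc k := x (Suc k) + x k))) (Ssh k x) \<partial>PL {0..n})"
    by (simp add: Ssh_Suc)
  also have "\<dots> = (\<integral>\<^sup>+x. h (x(Suc k := x (Suc k) + x k)) \<partial>PL {0..n})"
    using Suc.IH[OF mA] Suc.prems by (simp add: fun_upd_def)
  also have "\<dots> = (\<integral>\<^sup>+x. h (x(Suc k := x k + 1 * x (Suc k))) * ennreal 1 \<partial>PL {0..n})"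
    by (simp add: add.commute)
  also have "\<dots> = (\<integral>\<^sup>+x. h x \<partial>PL {0..n})"
    by (rule coord_affine[OF _ kI]) (use Suc.prems in auto)
  finally show ?case .
qed

definition pairs :: "nat \<Rightarrow> (nat \<times> nat) set" where
  "pairs n = {(i, j). 1 \<le> i \<and> i < j \<and> j \<le> n}"

lemma finite_pairs[simp]: "finite (pairs n)"
  by (rule finite_subset[of _ "{1..n} \<times> {1..n}"]) (auto simp: pairs_def)

definition fL :: "nat \<Rightarrow> nat \<Rightarrow> nat \<Rightarrow> nat \<Rightarrow> (nat \<Rightarrow> real) \<Rightarrow> ennreal" where
  "fL n r s m t = indicator {t. \<forall>k\<in>{0..n}. 0 < t k} t *
            ennreal ((\<Prod>i\<in>{1..n}. (\<Sum>k\<in>{0..<i}. t k) ^ r * (\<Sum>k\<in>{i..n}. t k) ^ s) *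
                     (\<Prod>(i, j)\<in>pairs n. (\<Sum>k\<in>{i..<j}. t k) ^ m) *
                     exp (- (\<Sum>k\<in>{0..n}. t k)))"

definition gU :: "nat \<Rightarrow> nat \<Rightarrow> nat \<Rightarrow> nat \<Rightarrow> (nat \<Rightarrow> real) \<Rightarrow> ennreal" where
  "gU n r s m u = indicator {u. 0 < u 0 \<and> (\<forall>i\<in>{1..n}. u (i-1) < u i)} u *
     ennreal ((\<Prod>i\<in>{1..n}. u (i-1) ^ r * (u n - u (i-1)) ^ s) *
              (\<Prod>(i, j)\<in>pairs n. (u (j-1) - u (i-1)) ^ m) * exp (- u n))"

lemma comp_meas: "i \<in> I \<Longrightarrow> (\<lambda>x. x i) \<in> borel_measurable (PL I)"
  using measurable_component_singleton[of i I "\<lambda>_. lborel"] by simp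

lemma pairs_meas:
  assumes "\<And>i j. (i,j) \<in> pairs n \<Longrightarrow> (\<lambda>x. F i j x) \<in> borel_measurable M"
  shows "(\<lambda>x. \<Prod>(i,j)\<in>pairs n. (F i j x :: real)) \<in> borel_measurable M"
  by (rule borel_measurable_prod) (use assms in auto)

lemma gU_meas[measurable]: "gU n r s m \<in> borel_measurable (PL {0..n})"
proof -
  have c[measurable]: "i \<le> n \<Longrightarrow> (\<lambda>x. x i) \<in> borel_measurable (PL {0..n})" for i
    by (rule comp_meas) auto
  have c1: "i \<in> {1..n} \<Longrightarrow> (\<lambda>x. x (i-1)) \<in> borel_measurable (PL {0..n})" for i
    by (rule comp_meas) auto
  have p1: "(\<lambda>x. (\<Prod>(i, j)\<in>pairs n. (x (j-1) - x (i-1)) ^ m)) \<in> borel_measurable (PL {0..n})"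
    by (rule pairs_meas) (auto simp: pairs_def intro!: borel_measurable_power borel_measurable_diff c)
  have p2: "(\<lambda>x. (\<Prod>i\<in>{1..n}. x (i-1) ^ r * (x n - x (i-1)) ^ s)) \<in> borel_measurable (PL {0..n})"
    by (rule borel_measurable_prod) (auto intro!: borel_measurable_power borel_measurable_diff borel_measurable_times c)
  have p3: "(\<lambda>x. ennreal ((\<Prod>i\<in>{1..n}. x (i-1) ^ r * (x n - x (i-1)) ^ s) *
              (\<Prod>(i, j)\<in>pairs n. (x (j - 1) - x (i - 1)) ^ m) * exp (- x n))) \<in> borel_measurable (PL {0..n})"
    using p1 p2 by measurable
  have p4: "{u \<in> space (PL {0..n}). 0 < u 0 \<and> (\<forall>i\<in>{1..n}. u (i-1) < u i)} \<in> sets (PL {0..n})"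
    using c1 by measurable auto
  have "(\<lambda>x. indicator {u \<in> space (PL {0..n}). 0 < u 0 \<and> (\<forall>i\<in>{1..n}. u (i-1) < u i)} x *
     ennreal ((\<Prod>i\<in>{1..n}. x (i-1) ^ r * (x n - x (i-1)) ^ s) *
              (\<Prod>(i, j)\<in>pairs n. (x (j - 1) - x (i - 1)) ^ m) * exp (- x n))) \<in> borel_measurable (PL {0..n})"
    using p3 p4 by measurable
  then show ?thesis
    by (rule measurable_cong[THEN iffD1, rotated]) (auto simp: gU_def indicator_def)
qed

lemma Ssh_n: "i \<le> n \<Longrightarrow> Ssh n t i = (\<Sum>j=0..i. t j)"
  by (simp add: Ssh_def)

lemma sum_split_at: "i \<le> Suc n \<Longrightarrow> (\<Sum>k=0..n. t k) = (\<Sum>k\<in>{0..<i}. t k) + (\<Sum>k\<in>{i..n}. (t k::real))"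
  using sum.atLeastLessThan_concat[of 0 i "Suc n" t]
  by (simp add: atLeastLessThanSuc_atLeastAtMost)

lemma fL_gU: "fL n r s m t = gU n r s m (Ssh n t)"
proof -
  have pre: "Ssh n t (i-1) = (\<Sum>k\<in>{0..<i}. t k)" if H: "1 \<le> i" "i \<le> n" for i
  proof -
    obtain j where j: "i = Suc j" using H by (cases i) auto
    show ?thesis using H by (simp add: Ssh_n j atLeastLessThanSuc_atLeastAtMost)
  qed
  have tot: "Ssh n t n = (\<Sum>k\<in>{0..n}. t k)" by (simp add: Ssh_n)
  have suf: "Ssh n t n - Ssh n t (i-1) = (\<Sum>k\<in>{i..n}. t k)" if "1 \<le> i" "i \<le> n" for i
    using that pre[OF that] tot sum_split_at[of i n t] by simp
  have mid: "Ssh n t (j-1) - Ssh n t (i-1) = (\<Sum>k\<in>{i..<j}. t k)" if "(i,j) \<in> pairs n" for i j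
    using that pre[of i] pre[of j] sum.atLeastLessThan_concat[of 0 i j t]
    by (auto simp: pairs_def)
  have reg: "(\<forall>k\<in>{0..n}. 0 < t k) \<longleftrightarrow> (0 < Ssh n t 0 \<and> (\<forall>i\<in>{1..n}. Ssh n t (i-1) < Ssh n t i))"
  proof -
    have st: "Ssh n t i = Ssh n t (i-1) + t i" if H: "1 \<le> i" "i \<le> n" for i
    proof -
      obtain j where j: "i = Suc j" using H by (cases i) auto
      show ?thesis using H by (simp add: Ssh_n j)
    qed
    have "Ssh n t 0 = t 0" by (simp add: Ssh_n)
    moreover have "(\<forall>i\<in>{1..n}. Ssh n t (i-1) < Ssh n t i) \<longleftrightarrow> (\<forall>i\<in>{1..n}. 0 < t i)"
    proof -
      have "Ssh n t (i-1) < Ssh n t i \<longleftrightarrow> 0 < t i" if "1 \<le> i" "i \<le> n" for i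
        using st[OF that] by linarith
      then show ?thesis by auto
    qed
    moreover have "(\<forall>k\<in>{0..n}. 0 < t k) \<longleftrightarrow> 0 < t 0 \<and> (\<forall>i\<in>{1..n}. 0 < t i)"
      apply auto
      subgoal for k by (cases "k = 0") auto
      done
    ultimately show ?thesis by simp
  qed
  have suf': "Ssh n t n - (\<Sum>k\<in>{0..<i}. t k) = (\<Sum>k\<in>{i..n}. t k)" if "1 \<le> i" "i \<le> n" for i
    using suf[OF that] pre[OF that] by simp
  have P1: "(\<Prod>i\<in>{1..n}. (\<Sum>k\<in>{0..<i}. t k) ^ r * (\<Sum>k\<in>{i..n}. t k) ^ s)
      = (\<Prod>i\<in>{1..n}. Ssh n t (i-1) ^ r * (Ssh n t n - Ssh n t (i-1)) ^ s)"
  proof (rule prod.cong[OF refl])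
    fix i assume "i \<in> {1..n}"
    then show "(\<Sum>k\<in>{0..<i}. t k) ^ r * (\<Sum>k\<in>{i..n}. t k) ^ s = Ssh n t (i-1) ^ r * (Ssh n t n - Ssh n t (i-1)) ^ s"
      using pre[of i] suf'[of i] by simp
  qed
  have P2: "(\<Prod>(i, j)\<in>pairs n. (\<Sum>k\<in>{i..<j}. t k) ^ m) = (\<Prod>(i, j)\<in>pairs n. (Ssh n t (j-1) - Ssh n t (i-1)) ^ m)"
  proof (rule prod.cong[OF refl])
    fix p assume "p \<in> pairs n"
    then show "(case p of (i, j) \<Rightarrow> (\<Sum>k\<in>{i..<j}. t k) ^ m) = (case p of (i, j) \<Rightarrow> (Ssh n t (j-1) - Ssh n t (i-1)) ^ m)"
      using mid by (cases p) simp
  qed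
  have P3: "indicator {t. \<forall>k\<in>{0..n}. 0 < t k} t = (indicator {u. 0 < u 0 \<and> (\<forall>i\<in>{1..n}. u (i-1) < u i)} (Ssh n t) :: ennreal)"
    using reg unfolding indicator_def by simp
  show ?thesis
    unfolding fL_def gU_def P1 P2 P3 tot[symmetric] by (rule refl)
qed

definition Tsc :: "nat \<Rightarrow> nat \<Rightarrow> (nat \<Rightarrow> real) \<Rightarrow> nat \<Rightarrow> real" where
  "Tsc n k x = (\<lambda>i. if i < k then x n * x i else x i)"

lemma Tsc_meas[measurable]:
  assumes "k \<le> n"
  shows "Tsc n k \<in> measurable (PL {0..n}) (PL {0..n})"
proof -
  have "(\<lambda>\<omega> i. (\<lambda>i \<omega>. if i < k then \<omega> n * \<omega> i else \<omega> i) i \<omega>) \<in> measurable (PL {0..n}) (PL {0..n})"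
  proof (rule measurable_PiM_single')
    fix i assume i: "i \<in> {0..n}"
    have [measurable]: "(\<lambda>x. x i) \<in> borel_measurable (PL {0..n})" "(\<lambda>x. x n) \<in> borel_measurable (PL {0..n})"
      using i by (auto intro: comp_meas)
    show "(\<lambda>\<omega>. if i < k then \<omega> n * \<omega> i else \<omega> i) \<in> measurable (PL {0..n}) lborel"
      by simp
  next
    show "(\<lambda>\<omega> i. if i < k then \<omega> n * \<omega> i else \<omega> i) \<in> space (PL {0..n}) \<rightarrow> (\<Pi>\<^sub>E i\<in>{0..n}. space lborel)"
      using assms by (auto simp: space_PiM PiE_def extensional_def)
  qed
  moreover have "(\<lambda>\<omega> i. (\<lambda>i \<omega>. if i < k then \<omega> n * \<omega> i else \<omega> i) i \<omega>) = Tsc n k"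
    by (auto simp: fun_eq_iff Tsc_def)
  ultimately show ?thesis by simp
qed

lemma scale_all:
  assumes h[measurable]: "h \<in> borel_measurable (PL {0..n})"
    and h0: "\<And>x. x n \<le> 0 \<Longrightarrow> h x = 0" and "k \<le> n"
  shows "(\<integral>\<^sup>+x. h (Tsc n k x) * ennreal (x n ^ k) \<partial>PL {0..n}) = (\<integral>\<^sup>+x. h x \<partial>PL {0..n})"
  using assms(3)
proof (induction k)
  case 0
  have "Tsc n 0 x = x" for x by (auto simp: Tsc_def fun_eq_iff)
  then show ?case by simp
next
  case (Suc k)
  have kI: "k \<in> {0..n}" and kn: "k \<noteq> n" "k < n" using Suc.prems by auto
  define b where "b x = (if 0 < x n then x n else 1)" for x :: "nat \<Rightarrow> real"
  have cn[measurable]: "(\<lambda>x. x n) \<in> borel_measurable (PL {0..n})" by (rule comp_meas) auto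
  have [measurable]: "b \<in> borel_measurable (PL {0..n})" unfolding b_def by measurable
  have [measurable]: "Tsc n k \<in> measurable (PL {0..n}) (PL {0..n})" using Suc.prems by simp
  have mf: "(\<lambda>x. h (Tsc n k x) * ennreal (x n ^ k)) \<in> borel_measurable (PL {0..n})"
    by measurable
  have pw: "h (Tsc n k (x(k := 0 + b x * x k))) * ennreal ((x(k := 0 + b x * x k)) n ^ k) * ennreal (b x)
        = h (Tsc n (Suc k) x) * ennreal (x n ^ Suc k)" for x
  proof (cases "0 < x n")
    case True
    have "Tsc n k (x(k := 0 + b x * x k)) = Tsc n (Suc k) x"
      using True kn by (auto simp: Tsc_def b_def fun_eq_iff less_Suc_eq)
    moreover have "ennreal (x n ^ k) * ennreal (x n) = ennreal (x n ^ Suc k)"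
      using True by (simp add: ennreal_mult'[symmetric] mult.commute)
    ultimately show ?thesis using True kn by (simp add: b_def mult.assoc)
  next
    case False
    have "Tsc n k (x(k := 0 + b x * x k)) n \<le> 0" "Tsc n (Suc k) x n \<le> 0"
      using False kn by (auto simp: Tsc_def b_def)
    then show ?thesis using h0 by simp
  qed
  have "(\<integral>\<^sup>+x. h (Tsc n (Suc k) x) * ennreal (x n ^ Suc k) \<partial>PL {0..n})
      = (\<integral>\<^sup>+x. h (Tsc n k (x(k := 0 + b x * x k))) * ennreal ((x(k := 0 + b x * x k)) n ^ k) * ennreal (b x) \<partial>PL {0..n})"
    by (rule nn_integral_cong) (simp only: pw)
  also have "\<dots> = (\<integral>\<^sup>+x. h (Tsc n k x) * ennreal (x n ^ k) \<partial>PL {0..n})"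
    by (rule coord_affine[OF _ kI mf, where a="\<lambda>_. 0" and b=b]) (use kn in \<open>auto simp: b_def\<close>)
  also have "\<dots> = (\<integral>\<^sup>+x. h x \<partial>PL {0..n})"
    using Suc by simp
  finally show ?case .
qed

definition Hf :: "nat \<Rightarrow> nat \<Rightarrow> nat \<Rightarrow> nat \<Rightarrow> (nat \<Rightarrow> real) \<Rightarrow> ennreal" where
  "Hf n r s m y = indicator {y. 0 < y 0 \<and> (\<forall>i\<in>{1..<n}. y (i-1) < y i) \<and> y (n-1) < 1} y *
     ennreal ((\<Prod>i\<in>{1..n}. y (i-1) ^ r * (1 - y (i-1)) ^ s) *
              (\<Prod>(i, j)\<in>pairs n. (y (j-1) - y (i-1)) ^ m))"

lemma chain_le:
  fixes u :: "nat \<Rightarrow> real"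
  assumes "\<forall>i\<in>{1..n}. u (i-1) < (u i :: real)"
  shows "k \<le> n \<Longrightarrow> u 0 \<le> u k"
proof (induction k)
  case 0 show ?case by simp
next
  case (Suc k)
  then have "u k < u (Suc k)" using assms by force
  then show ?case using Suc by simp
qed

lemma ennreal_aux:
  fixes X Y Q :: real
  assumes "0 \<le> X" "0 \<le> Y"
  shows "ennreal (X * Q) * ennreal Y = ennreal (X * Y) * ennreal Q"
proof (cases "0 \<le> Q")
  case True
  then show ?thesis using assms by (simp add: ennreal_mult'[symmetric] mult_ac mult_nonneg_nonneg)
next
  case False
  then have "X * Q \<le> 0" using assms by (simp add: mult_nonneg_nonpos)
  then show ?thesis using False by (simp add: ennreal_neg)
qed

lemma gU_Tsc:
  assumes n: "n > 0"
  shows "gU n r s m (Tsc n n y) * ennreal (y n ^ n)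
       = ennreal (y n ^ ((r+s+1)*n + m * card (pairs n)) * exp (- y n)) * indicator {0..} (y n) * Hf n r s m y"
proof (cases "0 < y n")
  case False
  have "gU n r s m (Tsc n n y) = 0"
  proof -
    have "\<not> (0 < Tsc n n y 0 \<and> (\<forall>i\<in>{1..n}. Tsc n n y (i-1) < Tsc n n y i))"
    proof
      assume A: "0 < Tsc n n y 0 \<and> (\<forall>i\<in>{1..n}. Tsc n n y (i-1) < Tsc n n y i)"
      then have "Tsc n n y 0 \<le> Tsc n n y n" using chain_le[of n "Tsc n n y" n] by auto
      then show False using A False by (simp add: Tsc_def)
    qed
    then show ?thesis by (simp add: gU_def indicator_def)
  qed
  moreover have "ennreal (y n ^ ((r+s+1)*n + m * card (pairs n)) * exp (- y n)) * indicator {0..} (y n) = 0"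
  proof (cases "y n = 0")
    case True
    then show ?thesis using n by simp
  next
    case False': False
    then show ?thesis using False by (simp add: indicator_def)
  qed
  ultimately show ?thesis by simp
next
  case True
  define U where "U = y n"
  have U: "0 < U" using True U_def by simp
  have Tl: "Tsc n n y i = U * y i" if "i < n" for i using that by (simp add: Tsc_def U_def)
  have Tn: "Tsc n n y n = U" by (simp add: Tsc_def U_def)
  have ind: "indicator {u. 0 < u 0 \<and> (\<forall>i\<in>{1..n}. u (i-1) < u i)} (Tsc n n y)
        = (indicator {y. 0 < y 0 \<and> (\<forall>i\<in>{1..<n}. y (i-1) < y i) \<and> y (n-1) < 1} y :: ennreal)"
  proof -
    have e1: "0 < Tsc n n y 0 \<longleftrightarrow> 0 < y 0" using Tl[of 0] n U by (simp add: zero_less_mult_iff)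
    have e2: "(\<forall>i\<in>{1..n}. Tsc n n y (i-1) < Tsc n n y i) \<longleftrightarrow> (\<forall>i\<in>{1..<n}. y (i-1) < y i) \<and> y (n-1) < 1"
    proof -
      have a: "Tsc n n y (i-1) < Tsc n n y i \<longleftrightarrow> y (i-1) < y i" if "i \<in> {1..<n}" for i
      proof -
        have "i - 1 < n" "i < n" using that by auto
        then show ?thesis using Tl[of i] Tl[of "i-1"] U by simp
      qed
      have b: "Tsc n n y (n-1) < Tsc n n y n \<longleftrightarrow> y (n-1) < 1"
        using Tl[of "n-1"] Tn U n by simp
      have "{1..n} = insert n {1..<n}" using n by auto
      then show ?thesis using a b by auto
    qed
    show ?thesis using e1 e2 by (simp add: indicator_def)
  qed
  have p1: "(\<Prod>i\<in>{1..n}. Tsc n n y (i-1) ^ r * (Tsc n n y n - Tsc n n y (i-1)) ^ s)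
      = U ^ ((r+s)*n) * (\<Prod>i\<in>{1..n}. y (i-1) ^ r * (1 - y (i-1)) ^ s)"
  proof -
    have "(\<Prod>i\<in>{1..n}. Tsc n n y (i-1) ^ r * (Tsc n n y n - Tsc n n y (i-1)) ^ s)
        = (\<Prod>i\<in>{1..n}. U ^ (r+s) * (y (i-1) ^ r * (1 - y (i-1)) ^ s))"
    proof (rule prod.cong[OF refl])
      fix i assume "i \<in> {1..n}"
      then have "i - 1 < n" by auto
      then show "Tsc n n y (i-1) ^ r * (Tsc n n y n - Tsc n n y (i-1)) ^ s = U ^ (r+s) * (y (i-1) ^ r * (1 - y (i-1)) ^ s)"
      proof -
        have d: "U - U * y (i-1) = U * (1 - y (i-1))"
          by (simp add: algebra_simps)
        show ?thesis unfolding Tn Tl[OF \<open>i - 1 < n\<close>] d by (simp add: power_mult_distrib power_add mult_ac)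
      qed
    qed
    also have "\<dots> = U ^ ((r+s)*n) * (\<Prod>i\<in>{1..n}. y (i-1) ^ r * (1 - y (i-1)) ^ s)"
      by (simp add: prod.distrib power_mult[symmetric] mult.commute)
    finally show ?thesis .
  qed
  have p2: "(\<Prod>(i, j)\<in>pairs n. (Tsc n n y (j-1) - Tsc n n y (i-1)) ^ m)
      = U ^ (m * card (pairs n)) * (\<Prod>(i, j)\<in>pairs n. (y (j-1) - y (i-1)) ^ m)"
  proof -
    have "(\<Prod>(i, j)\<in>pairs n. (Tsc n n y (j-1) - Tsc n n y (i-1)) ^ m)
        = (\<Prod>p\<in>pairs n. U ^ m * (case p of (i, j) \<Rightarrow> (y (j-1) - y (i-1)) ^ m))"
    proof (rule prod.cong[OF refl])
      fix p assume "p \<in> pairs n"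
      then obtain i j where p: "p = (i, j)" "i - 1 < n" "j - 1 < n" by (cases p) (auto simp: pairs_def)
      then show "(case p of (i, j) \<Rightarrow> (Tsc n n y (j-1) - Tsc n n y (i-1)) ^ m) = U ^ m * (case p of (i, j) \<Rightarrow> (y (j-1) - y (i-1)) ^ m)"
        using Tl[of "i-1"] Tl[of "j-1"] by (simp add: power_mult_distrib right_diff_distrib[symmetric])
    qed
    also have "\<dots> = U ^ (m * card (pairs n)) * (\<Prod>(i, j)\<in>pairs n. (y (j-1) - y (i-1)) ^ m)"
      by (simp add: prod.distrib power_mult)
    finally show ?thesis .
  qed
  have "gU n r s m (Tsc n n y) * ennreal (y n ^ n)
      = indicator {y. 0 < y 0 \<and> (\<forall>i\<in>{1..<n}. y (i-1) < y i) \<and> y (n-1) < 1} y *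
        ennreal ((U ^ ((r+s)*n) * (\<Prod>i\<in>{1..n}. y (i-1) ^ r * (1 - y (i-1)) ^ s)) *
          (U ^ (m * card (pairs n)) * (\<Prod>(i, j)\<in>pairs n. (y (j-1) - y (i-1)) ^ m)) * exp (- U)) * ennreal (U ^ n)"
    unfolding gU_def ind unfolding p1 p2 unfolding Tn U_def ..
  also have "\<dots> = ennreal (U ^ ((r+s+1)*n + m * card (pairs n)) * exp (- U)) * indicator {0..} U * Hf n r s m y"
  proof -
    have e: "ennreal ((U ^ ((r+s)*n) * P1) * (U ^ (m * card (pairs n)) * P2) * exp (- U)) * ennreal (U ^ n)
        = ennreal (U ^ ((r+s+1)*n + m * card (pairs n)) * exp (- U)) * ennreal (P1 * P2)" for P1 P2
    proof -
      define X where "X = U ^ ((r+s)*n) * U ^ (m * card (pairs n)) * exp (- U)"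
      have A1: "(U ^ ((r+s)*n) * P1) * (U ^ (m * card (pairs n)) * P2) * exp (- U) = X * (P1 * P2)"
        by (simp add: mult_ac X_def)
      have A2: "X * U ^ n = U ^ ((r+s+1)*n + m * card (pairs n)) * exp (- U)"
        by (simp add: X_def power_add[symmetric] mult_ac algebra_simps)
      have X0: "0 \<le> X" using U by (simp add: X_def)
      show ?thesis unfolding A1 ennreal_aux[OF X0 zero_le_power[OF less_imp_le[OF U]]] A2 ..
    qed
    have i1: "indicator {0..} U = (1::ennreal)" using U by simp
    show ?thesis unfolding Hf_def i1
      by (subst mult.assoc[of "indicator _ y"], subst e) (simp add: mult_ac)
  qed
  finally show ?thesis by (simp add: U_def)
qed

lemma Hf_cong:
  assumes "\<And>k. k < n \<Longrightarrow> x k = x' k" "n > 0"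
  shows "Hf n r s m x = Hf n r s m x'"
proof -
  have s: "(0 < x 0 \<and> (\<forall>i\<in>{1..<n}. x (i-1) < x i) \<and> x (n-1) < 1) \<longleftrightarrow> (0 < x' 0 \<and> (\<forall>i\<in>{1..<n}. x' (i-1) < x' i) \<and> x' (n-1) < 1)"
  proof -
    have "x (i-1) < x i \<longleftrightarrow> x' (i-1) < x' i" if "i \<in> {1..<n}" for i
      using that assms(1)[of i] assms(1)[of "i-1"] by auto
    moreover have "x 0 = x' 0" "x (n-1) = x' (n-1)" using assms by auto
    ultimately show ?thesis by auto
  qed
  have p1: "(\<Prod>i\<in>{1..n}. x (i-1) ^ r * (1 - x (i-1)) ^ s) = (\<Prod>i\<in>{1..n}. x' (i-1) ^ r * (1 - x' (i-1)) ^ s)"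
    by (rule prod.cong) (use assms in auto)
  have p2: "(\<Prod>(i, j)\<in>pairs n. (x (j-1) - x (i-1)) ^ m) = (\<Prod>(i, j)\<in>pairs n. (x' (j-1) - x' (i-1)) ^ m)"
    by (rule prod.cong) (use assms in \<open>auto simp: pairs_def\<close>)
  show ?thesis unfolding Hf_def p1 p2 using s by (simp add: indicator_def)
qed

lemma Hf_meas:
  assumes "{0..<n} \<subseteq> I" "n > 0"
  shows "Hf n r s m \<in> borel_measurable (PL I)"
proof -
  have c: "i < n \<Longrightarrow> (\<lambda>x. x i) \<in> borel_measurable (PL I)" for i
    by (rule comp_meas) (use assms in auto)
  have c1[measurable]: "(\<lambda>x. x 0) \<in> borel_measurable (PL I)" "(\<lambda>x. x (n-1)) \<in> borel_measurable (PL I)"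
    using assms by (auto intro!: c)
  have p1: "(\<lambda>x. (\<Prod>(i, j)\<in>pairs n. (x (j-1) - x (i-1)) ^ m)) \<in> borel_measurable (PL I)"
    by (rule pairs_meas) (auto simp: pairs_def intro!: borel_measurable_power borel_measurable_diff c)
  have p2: "(\<lambda>x. (\<Prod>i\<in>{1..n}. x (i-1) ^ r * (1 - x (i-1)) ^ s)) \<in> borel_measurable (PL I)"
    by (rule borel_measurable_prod) (auto intro!: borel_measurable_power borel_measurable_diff borel_measurable_times c)
  have p3: "(\<lambda>x. ennreal ((\<Prod>i\<in>{1..n}. x (i-1) ^ r * (1 - x (i-1)) ^ s) *
              (\<Prod>(i, j)\<in>pairs n. (x (j - 1) - x (i - 1)) ^ m))) \<in> borel_measurable (PL I)"
    using p1 p2 by measurable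
  have c2: "i \<in> {1..<n} \<Longrightarrow> (\<lambda>x. x (i-1)) \<in> borel_measurable (PL I)" "i \<in> {1..<n} \<Longrightarrow> (\<lambda>x. x i) \<in> borel_measurable (PL I)" for i
    by (auto intro!: c)
  have p4: "{u \<in> space (PL I). 0 < u 0 \<and> (\<forall>i\<in>{1..<n}. u (i-1) < u i) \<and> u (n-1) < 1} \<in> sets (PL I)"
    using c2 by measurable
  have "(\<lambda>x. indicator {u \<in> space (PL I). 0 < u 0 \<and> (\<forall>i\<in>{1..<n}. u (i-1) < u i) \<and> u (n-1) < 1} x *
     ennreal ((\<Prod>i\<in>{1..n}. x (i-1) ^ r * (1 - x (i-1)) ^ s) *
              (\<Prod>(i, j)\<in>pairs n. (x (j - 1) - x (i - 1)) ^ m))) \<in> borel_measurable (PL I)"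
    using p3 p4 by measurable
  then show ?thesis
    by (rule measurable_cong[THEN iffD1, rotated]) (auto simp: Hf_def indicator_def)
qed

lemma gamma_split:
  assumes n: "n > 0"
  shows "(\<integral>\<^sup>+y. ennreal (y n ^ N * exp (- y n)) * indicator {0..} (y n) * Hf n r s m y \<partial>PL {0..n})
       = ennreal (fact N) * (\<integral>\<^sup>+y. Hf n r s m y \<partial>PL {0..<n})"
proof -
  have I: "{0..n} = insert n {0..<n}" by auto
  have cn[measurable]: "(\<lambda>x. x n) \<in> borel_measurable (PL {0..n})" by (rule comp_meas) auto
  have [measurable]: "Hf n r s m \<in> borel_measurable (PL {0..n})" by (rule Hf_meas) (use n in auto)
  have [measurable]: "Hf n r s m \<in> borel_measurable (PL {0..<n})" by (rule Hf_meas) (use n in auto)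
  have mf: "(\<lambda>y. ennreal (y n ^ N * exp (- y n)) * indicator {0..} (y n) * Hf n r s m y) \<in> borel_measurable (PL (insert n {0..<n}))"
    unfolding I[symmetric] by measurable
  have "(\<integral>\<^sup>+y. ennreal (y n ^ N * exp (- y n)) * indicator {0..} (y n) * Hf n r s m y \<partial>PL {0..n})
     = (\<integral>\<^sup>+x. \<integral>\<^sup>+v. ennreal (v ^ N * exp (- v)) * indicator {0..} v * Hf n r s m (x(n := v)) \<partial>lborel \<partial>PL {0..<n})"
    unfolding I using PLB.product_nn_integral_insert[OF _ _ mf] by simp
  also have "\<dots> = (\<integral>\<^sup>+x. ennreal (fact N) * Hf n r s m x \<partial>PL {0..<n})"
  proof (rule nn_integral_cong)
    fix x assume "x \<in> space (PL {0..<n})"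
    have "Hf n r s m (x(n := v)) = Hf n r s m x" for v by (rule Hf_cong) (use n in auto)
    then have "(\<integral>\<^sup>+v. ennreal (v ^ N * exp (- v)) * indicator {0..} v * Hf n r s m (x(n := v)) \<partial>lborel)
        = (\<integral>\<^sup>+v. ennreal (v ^ N * exp (- v)) * indicator {0..} v \<partial>lborel) * Hf n r s m x"
      by (simp add: nn_integral_multc)
    also have "\<dots> = ennreal (fact N) * Hf n r s m x"
      using nn_intergal_power_times_exp_Ici[of N] by simp
    finally show "(\<integral>\<^sup>+v. ennreal (v ^ N * exp (- v)) * indicator {0..} v * Hf n r s m (x(n := v)) \<partial>lborel)
        = ennreal (fact N) * Hf n r s m x" .
  qed
  also have "\<dots> = ennreal (fact N) * (\<integral>\<^sup>+y. Hf n r s m y \<partial>PL {0..<n})"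
    by (simp add: nn_integral_cmult)
  finally show ?thesis .
qed

lemma PL_reindex_distr:
  assumes q: "bij_betw q I J" and fin: "finite I"
  shows "distr (PL J) (PL I) (\<lambda>x. \<lambda>i\<in>I. x (q i)) = PL I"
proof -
  have finJ: "finite J" using bij_betw_finite q fin by blast
  have qJ: "i \<in> I \<Longrightarrow> q i \<in> J" for i using q by (auto simp: bij_betw_def)
  have mq[measurable]: "(\<lambda>x. \<lambda>i\<in>I. x (q i)) \<in> measurable (PL J) (PL I)"
    by (rule measurable_restrict) (use qJ in \<open>auto intro: measurable_component_singleton\<close>)
  show ?thesis
  proof (rule PLB.PiM_eqI[OF fin])
    show "sets (distr (PL J) (PL I) (\<lambda>x. \<lambda>i\<in>I. x (q i))) = sets (PL I)" by simp
  next
    fix A :: "nat \<Rightarrow> real set" assume A: "\<And>i. i \<in> I \<Longrightarrow> A i \<in> sets lborel"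
    let ?inv = "inv_into I q"
    have binv: "bij_betw ?inv J I" using q by (rule bij_betw_inv_into)
    have invJ: "j \<in> J \<Longrightarrow> ?inv j \<in> I" for j using binv by (auto simp: bij_betw_def)
    have pre: "(\<lambda>x. \<lambda>i\<in>I. x (q i)) -` Pi\<^sub>E I A \<inter> space (PL J) = Pi\<^sub>E J (\<lambda>j. A (?inv j))"
    proof (intro equalityI subsetI)
      fix x assume x: "x \<in> (\<lambda>x. \<lambda>i\<in>I. x (q i)) -` Pi\<^sub>E I A \<inter> space (PL J)"
      show "x \<in> Pi\<^sub>E J (\<lambda>j. A (?inv j))"
      proof -
        have "x j \<in> A (?inv j)" if "j \<in> J" for j
        proof -
          have "q (?inv j) = j" using q that by (simp add: bij_betw_def f_inv_into_f)
          then show ?thesis using x invJ[OF that] by (auto simp: PiE_def Pi_def)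
        qed
        then show ?thesis using x by (auto simp: space_PiM PiE_def)
      qed
    next
      fix x assume x: "x \<in> Pi\<^sub>E J (\<lambda>j. A (?inv j))"
      have "x (q i) \<in> A i" if "i \<in> I" for i
      proof -
        have "?inv (q i) = i" using q that by (simp add: bij_betw_def inv_into_f_f)
        then show ?thesis using x qJ[OF that] by (auto simp: PiE_def Pi_def)
      qed
      then show "x \<in> (\<lambda>x. \<lambda>i\<in>I. x (q i)) -` Pi\<^sub>E I A \<inter> space (PL J)"
        using x by (auto simp: space_PiM PiE_def)
    qed
    have "emeasure (distr (PL J) (PL I) (\<lambda>x. \<lambda>i\<in>I. x (q i))) (Pi\<^sub>E I A)
        = emeasure (PL J) ((\<lambda>x. \<lambda>i\<in>I. x (q i)) -` Pi\<^sub>E I A \<inter> space (PL J))"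
      by (rule emeasure_distr[OF mq]) (use A fin in \<open>auto intro!: sets_PiM_I_finite\<close>)
    also have "\<dots> = (\<Prod>j\<in>J. emeasure lborel (A (?inv j)))"
      unfolding pre by (rule PLB.emeasure_PiM[OF finJ]) (use A invJ in auto)
    also have "\<dots> = (\<Prod>i\<in>I. emeasure lborel (A i))"
      by (rule prod.reindex_bij_betw[OF binv])
    finally show "emeasure (distr (PL J) (PL I) (\<lambda>x. \<lambda>i\<in>I. x (q i))) (Pi\<^sub>E I A) = (\<Prod>i\<in>I. emeasure lborel (A i))" .
  qed
qed

lemma PL_reindex:
  assumes q: "bij_betw q I J" and fin: "finite I" and f: "f \<in> borel_measurable (PL I)"
  shows "(\<integral>\<^sup>+x. f (\<lambda>i\<in>I. x (q i)) \<partial>PL J) = (\<integral>\<^sup>+x. f x \<partial>PL I)"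
proof -
  have qJ: "i \<in> I \<Longrightarrow> q i \<in> J" for i using q by (auto simp: bij_betw_def)
  have mq: "(\<lambda>x. \<lambda>i\<in>I. x (q i)) \<in> measurable (PL J) (PL I)"
    by (rule measurable_restrict) (use qJ in \<open>auto intro: measurable_component_singleton\<close>)
  have "(\<integral>\<^sup>+x. f x \<partial>PL I) = (\<integral>\<^sup>+x. f x \<partial>distr (PL J) (PL I) (\<lambda>x. \<lambda>i\<in>I. x (q i)))"
    using PL_reindex_distr[OF q fin] by simp
  also have "\<dots> = (\<integral>\<^sup>+x. f (\<lambda>i\<in>I. x (q i)) \<partial>PL J)"
    by (rule nn_integral_distr[OF mq]) (use f in simp)
  finally show ?thesis ..
qed

lemma map_upt_strict:
  fixes f :: "nat \<Rightarrow> real"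
  assumes "\<forall>i\<in>{1..n}. \<forall>j\<in>{1..n}. i < j \<longrightarrow> f i < f j"
  shows "sorted_wrt (<) (map f [1..<Suc n])"
  unfolding sorted_wrt_iff_nth_less using assms by (auto simp: nth_upt simp del: upt_Suc)

lemma sort_unique:
  fixes x :: "nat \<Rightarrow> real"
  assumes inj: "inj_on x {1..n}"
    and s: "\<sigma> permutes {1..n}" "\<forall>i\<in>{1..n}. \<forall>j\<in>{1..n}. i < j \<longrightarrow> x (\<sigma> i) < x (\<sigma> j)"
    and t: "\<tau> permutes {1..n}" "\<forall>i\<in>{1..n}. \<forall>j\<in>{1..n}. i < j \<longrightarrow> x (\<tau> i) < x (\<tau> j)"
  shows "\<sigma> = \<tau>"
proof -
  have ls: "sorted_wrt (<) (map (\<lambda>i. x (\<sigma> i)) [1..<Suc n])" by (rule map_upt_strict) (use s in auto)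
  have lt: "sorted_wrt (<) (map (\<lambda>i. x (\<tau> i)) [1..<Suc n])" by (rule map_upt_strict) (use t in auto)
  have ss: "set (map (\<lambda>i. x (\<sigma> i)) [1..<Suc n]) = x ` {1..n}"
  proof -
    have "(\<lambda>i. x (\<sigma> i)) ` {1..n} = x ` {1..n}" using permutes_image[OF s(1)] by (metis image_image)
    then show ?thesis by (simp del: upt_Suc add: atLeastLessThanSuc_atLeastAtMost)
  qed
  have st: "set (map (\<lambda>i. x (\<tau> i)) [1..<Suc n]) = x ` {1..n}"
  proof -
    have "(\<lambda>i. x (\<tau> i)) ` {1..n} = x ` {1..n}" using permutes_image[OF t(1)] by (metis image_image)
    then show ?thesis by (simp del: upt_Suc add: atLeastLessThanSuc_atLeastAtMost)
  qed
  have eq: "map (\<lambda>i. x (\<sigma> i)) [1..<Suc n] = map (\<lambda>i. x (\<tau> i)) [1..<Suc n]"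
  proof -
    have "\<exists>!xs. sorted_wrt (<) xs \<and> set xs = x ` {1..n}"
      by (rule ex1_sorted_list_for_set_if_finite) simp
    then show ?thesis using ls lt ss st by blast
  qed
  show ?thesis
  proof
    fix i
    show "\<sigma> i = \<tau> i"
    proof (cases "i \<in> {1..n}")
      case True
      then have "x (\<sigma> i) = x (\<tau> i)"
        using arg_cong[OF eq, of "\<lambda>l. l ! (i - 1)"] by (auto simp del: upt_Suc)
      moreover have "\<sigma> i \<in> {1..n}" "\<tau> i \<in> {1..n}"
        using True permutes_in_image[OF s(1)] permutes_in_image[OF t(1)] by auto
      ultimately show ?thesis using inj by (auto dest: inj_onD)
    next
      case False
      then show ?thesis using permutes_not_in[OF s(1)] permutes_not_in[OF t(1)] by simp
    qed
  qed
qed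

lemma sort_exists:
  fixes x :: "nat \<Rightarrow> real"
  assumes inj: "inj_on x {1..n}"
  shows "\<exists>\<sigma>. \<sigma> permutes {1..n} \<and> (\<forall>i\<in>{1..n}. \<forall>j\<in>{1..n}. i < j \<longrightarrow> x (\<sigma> i) < x (\<sigma> j))"
proof -
  define L where "L = sorted_list_of_set (x ` {1..n})"
  have lenL: "length L = n" unfolding L_def using card_image[OF inj] by simp
  have setL: "set L = x ` {1..n}" unfolding L_def by simp
  have sL: "sorted_wrt (<) L" unfolding L_def by simp
  have dL: "distinct L" unfolding L_def by simp
  define \<sigma> where "\<sigma> i = (if i \<in> {1..n} then inv_into {1..n} x (L ! (i - 1)) else i)" for i
  have Lin: "i \<in> {1..n} \<Longrightarrow> L ! (i - 1) \<in> x ` {1..n}" for i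
    using lenL setL nth_mem[of "i-1" L] by auto
  have xs: "i \<in> {1..n} \<Longrightarrow> x (\<sigma> i) = L ! (i - 1)" for i
    using Lin by (simp add: \<sigma>_def f_inv_into_f)
  have sin: "i \<in> {1..n} \<Longrightarrow> \<sigma> i \<in> {1..n}" for i
    using Lin[of i] inv_into_into[of "L ! (i-1)" x "{1..n}"] by (simp add: \<sigma>_def)
  have injs: "inj_on \<sigma> {1..n}"
  proof (rule inj_onI)
    fix i j assume ij: "i \<in> {1..n}" "j \<in> {1..n}" "\<sigma> i = \<sigma> j"
    then have "L ! (i - 1) = L ! (j - 1)" using xs by metis
    then have "i - 1 = j - 1" using nth_eq_iff_index_eq[OF dL, of "i-1" "j-1"] lenL ij by auto
    then show "i = j" using ij by auto
  qed
  have "\<sigma> ` {1..n} = {1..n}"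
  proof -
    have "\<sigma> ` {1..n} \<subseteq> {1..n}" using sin by auto
    then show ?thesis using endo_inj_surj[of "{1..n}" \<sigma>] injs by blast
  qed
  then have "bij_betw \<sigma> {1..n} {1..n}" using injs by (simp add: bij_betw_def)
  then have perm: "\<sigma> permutes {1..n}"
    by (rule bij_imp_permutes) (auto simp: \<sigma>_def)
  have "\<forall>i\<in>{1..n}. \<forall>j\<in>{1..n}. i < j \<longrightarrow> x (\<sigma> i) < x (\<sigma> j)"
  proof (intro ballI impI)
    fix i j assume ij: "i \<in> {1..n}" "j \<in> {1..n}" "i < j"
    then show "x (\<sigma> i) < x (\<sigma> j)"
      using xs sorted_wrt_nth_less[OF sL, of "i - 1" "j - 1"] lenL by auto
  qed
  with perm show ?thesis by blast
qed

definition D2 :: "nat \<Rightarrow> (nat \<times> nat) set" where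
  "D2 n = {(i, j). i \<in> {1..n} \<and> j \<in> {1..n} \<and> i \<noteq> j}"

lemma finite_D2[simp]: "finite (D2 n)"
  by (rule finite_subset[of _ "{1..n} \<times> {1..n}"]) (auto simp: D2_def)

lemma prod_D2:
  fixes H :: "nat \<Rightarrow> nat \<Rightarrow> real"
  assumes sym: "\<And>i j. H i j = H j i"
  shows "(\<Prod>(i, j)\<in>D2 n. H i j) = (\<Prod>(i, j)\<in>pairs n. H i j) ^ 2"
proof -
  have D: "D2 n = pairs n \<union> prod.swap ` pairs n" by (auto simp: D2_def pairs_def image_iff)
  have disj: "pairs n \<inter> prod.swap ` pairs n = {}" by (auto simp: pairs_def)
  have "(\<Prod>(i, j)\<in>prod.swap ` pairs n. H i j) = (\<Prod>p\<in>pairs n. (case_prod H) (prod.swap p))"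
    using prod.reindex[of prod.swap "pairs n" "case_prod H"] by (simp add: comp_def)
  also have "\<dots> = (\<Prod>(i, j)\<in>pairs n. H i j)"
    by (rule prod.cong) (auto simp: sym)
  finally have e: "(\<Prod>(i, j)\<in>prod.swap ` pairs n. H i j) = (\<Prod>(i, j)\<in>pairs n. H i j)" .
  show ?thesis unfolding D
    by (subst prod.union_disjoint) (auto simp: disj e power2_eq_square)
qed

lemma prod_D2_perm:
  fixes H :: "nat \<Rightarrow> nat \<Rightarrow> real"
  assumes \<sigma>: "\<sigma> permutes {1..n}"
  shows "(\<Prod>(i, j)\<in>D2 n. H (\<sigma> i) (\<sigma> j)) = (\<Prod>(i, j)\<in>D2 n. H i j)"
proof -
  define h where "h = (\<lambda>(i, j). (\<sigma> i, \<sigma> j))"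
  have inj: "inj \<sigma>" using permutes_inj[OF \<sigma>] .
  have bij: "bij_betw h (D2 n) (D2 n)"
  proof (rule bij_betw_imageI)
    show "inj_on h (D2 n)" using inj by (auto simp: h_def inj_on_def dest: injD)
    show "h ` D2 n = D2 n"
    proof
      show "h ` D2 n \<subseteq> D2 n" using permutes_in_image[OF \<sigma>] inj
        by (auto simp: h_def D2_def dest: injD)
    next
      show "D2 n \<subseteq> h ` D2 n"
      proof
        fix p assume p: "p \<in> D2 n"
        obtain i j where ij: "p = (i, j)" by (cases p)
        have "(inv \<sigma> i, inv \<sigma> j) \<in> D2 n" using p ij permutes_in_image[OF permutes_inv[OF \<sigma>]]
          permutes_inj[OF permutes_inv[OF \<sigma>]]
          by (auto simp: D2_def dest: injD)
        moreover have "h (inv \<sigma> i, inv \<sigma> j) = p"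
          using ij permutes_inverses(1)[OF \<sigma>] by (simp add: h_def)
        ultimately show "p \<in> h ` D2 n" by force
      qed
    qed
  qed
  have "(\<Prod>(i, j)\<in>D2 n. H (\<sigma> i) (\<sigma> j)) = (\<Prod>p\<in>D2 n. (case_prod H) (h p))"
    by (rule prod.cong) (auto simp: h_def)
  also have "\<dots> = (\<Prod>(i, j)\<in>D2 n. H i j)"
    by (rule prod.reindex_bij_betw[OF bij])
  finally show ?thesis .
qed

lemma prod_pairs_perm:
  fixes H :: "nat \<Rightarrow> nat \<Rightarrow> real"
  assumes sym: "\<And>i j. H i j = H j i" and nn: "\<And>i j. 0 \<le> H i j"
    and \<sigma>: "\<sigma> permutes {1..n}"
  shows "(\<Prod>(i, j)\<in>pairs n. H (\<sigma> i) (\<sigma> j)) = (\<Prod>(i, j)\<in>pairs n. H i j)"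
proof -
  have "(\<Prod>(i, j)\<in>pairs n. H (\<sigma> i) (\<sigma> j)) ^ 2 = (\<Prod>(i, j)\<in>pairs n. H i j) ^ 2"
    using prod_D2[of "\<lambda>i j. H (\<sigma> i) (\<sigma> j)" n] prod_D2[of H n] prod_D2_perm[OF \<sigma>, of H] sym
    by simp
  moreover have "0 \<le> (\<Prod>(i, j)\<in>pairs n. H (\<sigma> i) (\<sigma> j))" "0 \<le> (\<Prod>(i, j)\<in>pairs n. H i j)"
    using nn by (auto intro!: prod_nonneg split: prod.split)
  ultimately show ?thesis by simp
qed

definition pm :: "nat \<Rightarrow> (nat \<Rightarrow> nat) \<Rightarrow> (nat \<Rightarrow> real) \<Rightarrow> nat \<Rightarrow> real" where
  "pm n \<sigma> x = (\<lambda>i\<in>{1..n}. x (\<sigma> i))"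

definition Fc :: "nat \<Rightarrow> nat \<Rightarrow> nat \<Rightarrow> nat \<Rightarrow> (nat \<Rightarrow> real) \<Rightarrow> real" where
  "Fc n r s m x = (\<Prod>i\<in>{1..n}. x i ^ r * (1 - x i) ^ s) * (\<Prod>(i, j)\<in>pairs n. \<bar>x i - x j\<bar> ^ m)"

lemma Fc_perm:
  assumes \<sigma>: "\<sigma> permutes {1..n}"
  shows "Fc n r s m (pm n \<sigma> x) = Fc n r s m x"
proof -
  have p1: "(\<Prod>i\<in>{1..n}. pm n \<sigma> x i ^ r * (1 - pm n \<sigma> x i) ^ s) = (\<Prod>i\<in>{1..n}. x i ^ r * (1 - x i) ^ s)"
  proof -
    have "(\<Prod>i\<in>{1..n}. pm n \<sigma> x i ^ r * (1 - pm n \<sigma> x i) ^ s) = (\<Prod>i\<in>{1..n}. (\<lambda>k. x k ^ r * (1 - x k) ^ s) (\<sigma> i))"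
      by (rule prod.cong) (auto simp: pm_def)
    also have "\<dots> = (\<Prod>i\<in>{1..n}. x i ^ r * (1 - x i) ^ s)"
      by (rule prod.reindex_bij_betw[OF permutes_imp_bij[OF \<sigma>]])
    finally show ?thesis .
  qed
  have p2: "(\<Prod>(i, j)\<in>pairs n. \<bar>pm n \<sigma> x i - pm n \<sigma> x j\<bar> ^ m) = (\<Prod>(i, j)\<in>pairs n. \<bar>x i - x j\<bar> ^ m)"
  proof -
    have "(\<Prod>(i, j)\<in>pairs n. \<bar>pm n \<sigma> x i - pm n \<sigma> x j\<bar> ^ m) = (\<Prod>(i, j)\<in>pairs n. (\<lambda>a b. \<bar>x a - x b\<bar> ^ m) (\<sigma> i) (\<sigma> j))"
      by (rule prod.cong) (auto simp: pm_def pairs_def)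
    also have "\<dots> = (\<Prod>(i, j)\<in>pairs n. \<bar>x i - x j\<bar> ^ m)"
      by (rule prod_pairs_perm[OF _ _ \<sigma>]) (auto simp: abs_minus_commute)
    finally show ?thesis .
  qed
  show ?thesis unfolding Fc_def p1 p2 ..
qed

definition OS :: "nat \<Rightarrow> (nat \<Rightarrow> real) \<Rightarrow> bool" where
  "OS n x \<longleftrightarrow> (\<forall>i\<in>{1..n}. 0 < x i \<and> x i < 1) \<and> (\<forall>i\<in>{1..n}. \<forall>j\<in>{1..n}. i < j \<longrightarrow> x i < x j)"

lemma count_perm:
  fixes x :: "nat \<Rightarrow> real"
  assumes inj: "inj_on x {1..n}" and ne: "\<forall>i\<in>{1..n}. x i \<noteq> 0 \<and> x i \<noteq> 1"
  shows "(indicator {x. \<forall>i\<in>{1..n}. x i \<in> {0..1}} x :: ennreal)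
       = (\<Sum>\<sigma>\<in>{\<sigma>. \<sigma> permutes {1..n}}. indicator {y. OS n y} (pm n \<sigma> x))"
proof -
  have key: "OS n (pm n \<sigma> x) \<longleftrightarrow> (\<forall>i\<in>{1..n}. 0 < x i \<and> x i < 1) \<and> (\<forall>i\<in>{1..n}. \<forall>j\<in>{1..n}. i < j \<longrightarrow> x (\<sigma> i) < x (\<sigma> j))"
    if \<sigma>: "\<sigma> permutes {1..n}" for \<sigma>
  proof -
    have e: "(\<forall>i\<in>\<sigma> ` {1..n}. 0 < x i \<and> x i < 1) \<longleftrightarrow> (\<forall>i\<in>{1..n}. 0 < x i \<and> x i < 1)"
      unfolding permutes_image[OF \<sigma>] ..
    then have "(\<forall>i\<in>{1..n}. 0 < x (\<sigma> i) \<and> x (\<sigma> i) < 1) \<longleftrightarrow> (\<forall>i\<in>{1..n}. 0 < x i \<and> x i < 1)"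
      by simp
    then show ?thesis by (simp add: OS_def pm_def)
  qed
  show ?thesis
  proof (cases "\<forall>i\<in>{1..n}. x i \<in> {0..1}")
    case True
    then have c: "\<forall>i\<in>{1..n}. 0 < x i \<and> x i < 1" using ne by force
    obtain \<sigma>0 where s0: "\<sigma>0 permutes {1..n}" "\<forall>i\<in>{1..n}. \<forall>j\<in>{1..n}. i < j \<longrightarrow> x (\<sigma>0 i) < x (\<sigma>0 j)"
      using sort_exists[OF inj] by blast
    have "(\<Sum>\<sigma>\<in>{\<sigma>. \<sigma> permutes {1..n}}. indicator {y. OS n y} (pm n \<sigma> x))
        = (\<Sum>\<sigma>\<in>{\<sigma>. \<sigma> permutes {1..n}}. if \<sigma> = \<sigma>0 then 1 else (0::ennreal))"
    proof (rule sum.cong[OF refl])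
      fix \<sigma> assume "\<sigma> \<in> {\<sigma>. \<sigma> permutes {1..n}}"
      then have \<sigma>: "\<sigma> permutes {1..n}" by simp
      have "OS n (pm n \<sigma> x) \<longleftrightarrow> \<sigma> = \<sigma>0"
      proof
        assume "OS n (pm n \<sigma> x)"
        then have "\<forall>i\<in>{1..n}. \<forall>j\<in>{1..n}. i < j \<longrightarrow> x (\<sigma> i) < x (\<sigma> j)"
          using key[OF \<sigma>] by simp
        then show "\<sigma> = \<sigma>0" by (rule sort_unique[OF inj \<sigma> _ s0])
      next
        assume "\<sigma> = \<sigma>0"
        then show "OS n (pm n \<sigma> x)" using key[OF \<sigma>] c s0(2) by simp
      qed
      then show "indicator {y. OS n y} (pm n \<sigma> x) = (if \<sigma> = \<sigma>0 then 1 else (0::ennreal))"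
        by (simp add: indicator_def)
    qed
    also have "\<dots> = 1" using s0(1) finite_permutations[of "{1..n}"] by (simp add: sum.delta)
    finally show ?thesis using True by simp
  next
    case False
    have "indicator {y. OS n y} (pm n \<sigma> x) = (0::ennreal)" if "\<sigma> permutes {1..n}" for \<sigma>
    proof -
      obtain i where i: "i \<in> {1..n}" "x i \<notin> {0..1}" using False by blast
      have "\<not> (\<forall>i\<in>{1..n}. 0 < x i \<and> x i < 1)"
      proof
        assume "\<forall>i\<in>{1..n}. 0 < x i \<and> x i < 1"
        then have "0 < x i" "x i < 1" using i(1) by auto
        then show False using i(2) by auto
      qed
      then have "\<not> OS n (pm n \<sigma> x)" using key[OF that] by simp
      then show ?thesis by (simp add: indicator_def)
    qed
    then show ?thesis using False by (simp add: indicator_def)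
  qed
qed

lemma null_coord:
  assumes fin: "finite I" and k: "k \<in> I"
    and c[measurable]: "c \<in> borel_measurable (PL I)" and indc: "\<And>x y. c (x(k := y)) = c x"
  shows "AE x in PL I. x k \<noteq> c x"
proof (rule AE_I')
  define N where "N = {x \<in> space (PL I). x k = c x}"
  have ck[measurable]: "(\<lambda>x. x k) \<in> borel_measurable (PL I)" using k by (rule comp_meas)
  have Nm[measurable]: "N \<in> sets (PL I)" unfolding N_def by measurable
  have I: "I = insert k (I - {k})" using k by auto
  have fin': "finite (I - {k})" "k \<notin> I - {k}" using fin by auto
  have "emeasure (PL I) N = (\<integral>\<^sup>+x. indicator N x \<partial>PL I)" by simp
  also have "\<dots> = (\<integral>\<^sup>+x. \<integral>\<^sup>+y. indicator N (x(k := y)) \<partial>lborel \<partial>PL (I - {k}))"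
    using PLB.product_nn_integral_insert[OF fin', of "indicator N"] I by simp
  also have "\<dots> = (\<integral>\<^sup>+x. 0 \<partial>PL (I - {k}))"
  proof (rule nn_integral_cong)
    fix x assume x: "x \<in> space (PL (I - {k}))"
    have sp: "x(k := y) \<in> space (PL I)" for y
      using x k by (auto simp: space_PiM PiE_def extensional_def)
    have "(\<integral>\<^sup>+y. indicator N (x(k := y)) \<partial>lborel) = (\<integral>\<^sup>+y. indicator {c x} y \<partial>lborel)"
      by (rule nn_integral_cong) (use sp indc in \<open>auto simp: N_def indicator_def\<close>)
    also have "\<dots> = 0" by simp
    finally show "(\<integral>\<^sup>+y. indicator N (x(k := y)) \<partial>lborel) = 0" .
  qed
  also have "\<dots> = 0" by simp
  finally show "N \<in> null_sets (PL I)" using Nm by (simp add: null_sets_def)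
  show "{x \<in> space (PL I). \<not> x k \<noteq> c x} \<subseteq> N" by (auto simp: N_def)
qed

lemma AE_generic:
  "AE x in PL {1..n}. inj_on x {1..n} \<and> (\<forall>i\<in>{1..n}. x i \<noteq> 0 \<and> x i \<noteq> 1)"
proof -
  have a1: "AE x in PL {1..n}. \<forall>p\<in>D2 n. x (fst p) \<noteq> x (snd p)"
  proof (rule AE_finite_allI[OF finite_D2])
    fix p assume p: "p \<in> D2 n"
    then obtain i j where ij: "p = (i, j)" "i \<in> {1..n}" "j \<in> {1..n}" "i \<noteq> j" by (auto simp: D2_def)
    have "AE x in PL {1..n}. x i \<noteq> x j"
      by (rule null_coord) (use ij in \<open>auto intro: comp_meas\<close>)
    then show "AE x in PL {1..n}. x (fst p) \<noteq> x (snd p)" using ij by simp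
  qed
  have a2: "AE x in PL {1..n}. \<forall>i\<in>{1..n}. x i \<noteq> 0 \<and> x i \<noteq> 1"
  proof (rule AE_finite_allI)
    fix i assume i: "i \<in> {1..n}"
    have "AE x in PL {1..n}. x i \<noteq> 0" by (rule null_coord) (use i in auto)
    moreover have "AE x in PL {1..n}. x i \<noteq> 1" by (rule null_coord) (use i in auto)
    ultimately show "AE x in PL {1..n}. x i \<noteq> 0 \<and> x i \<noteq> 1" by eventually_elim auto
  qed simp
  from a1 a2 show ?thesis
  proof eventually_elim
    case (elim x)
    have "inj_on x {1..n}"
    proof (rule inj_onI)
      fix i j assume "i \<in> {1..n}" "j \<in> {1..n}" "x i = x j"
      then show "i = j" using elim(1) by (force simp: D2_def)
    qed
    then show ?case using elim(2) by simp
  qed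
qed

lemma Fc_meas: "Fc n r s m \<in> borel_measurable (PL {1..n})"
proof -
  have c: "i \<in> {1..n} \<Longrightarrow> (\<lambda>x. x i) \<in> borel_measurable (PL {1..n})" for i by (rule comp_meas)
  have p1: "(\<lambda>x. (\<Prod>(i, j)\<in>pairs n. \<bar>x i - x j\<bar> ^ m)) \<in> borel_measurable (PL {1..n})"
    by (rule pairs_meas) (auto simp: pairs_def intro!: borel_measurable_power borel_measurable_abs borel_measurable_diff c)
  have p2: "(\<lambda>x. (\<Prod>i\<in>{1..n}. x i ^ r * (1 - x i) ^ s)) \<in> borel_measurable (PL {1..n})"
    by (rule borel_measurable_prod) (auto intro!: borel_measurable_power borel_measurable_diff borel_measurable_times c)
  show ?thesis unfolding Fc_def using p1 p2 by measurable
qed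

lemma ind_meas:
  assumes "{x \<in> space M. P x} \<in> sets M"
  shows "(\<lambda>x. indicator {x. P x} x :: ennreal) \<in> borel_measurable M"
proof -
  have "(\<lambda>x. indicator {x \<in> space M. P x} x :: ennreal) \<in> borel_measurable M"
    using assms by simp
  then show ?thesis by (rule measurable_cong[THEN iffD1, rotated]) (auto simp: indicator_def)
qed

lemma OS_meas: "(\<lambda>x. indicator {y. OS n y} x :: ennreal) \<in> borel_measurable (PL {1..n})"
proof (rule ind_meas)
  have c[measurable]: "i \<in> {1..n} \<Longrightarrow> (\<lambda>x. x i) \<in> borel_measurable (PL {1..n})" for i by (rule comp_meas)
  show "{x \<in> space (PL {1..n}). OS n x} \<in> sets (PL {1..n})" unfolding OS_def by measurable
qed

lemma cube_meas: "(\<lambda>x. indicator {x. \<forall>i\<in>{1..n}. x i \<in> {0..1}} x :: ennreal) \<in> borel_measurable (PL {1..n})"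
proof (rule ind_meas)
  have c[measurable]: "i \<in> {1..n} \<Longrightarrow> (\<lambda>x. x i) \<in> borel_measurable (PL {1..n})" for i by (rule comp_meas)
  show "{x \<in> space (PL {1..n}). \<forall>i\<in>{1..n}. x i \<in> {0..1}} \<in> sets (PL {1..n})" by measurable
qed

lemma pm_meas:
  assumes "\<sigma> permutes {1..n}"
  shows "pm n \<sigma> \<in> measurable (PL {1..n}) (PL {1..n})"
  unfolding pm_def
  by (rule measurable_restrict) (use permutes_in_image[OF assms] in \<open>auto intro: measurable_component_singleton\<close>)

lemma symm:
  "(\<integral>\<^sup>+x. indicator {x. \<forall>i\<in>{1..n}. x i \<in> {0..1}} x * ennreal (Fc n r s m x) \<partial>PL {1..n})
   = ennreal (fact n) * (\<integral>\<^sup>+x. indicator {y. OS n y} x * ennreal (Fc n r s m x) \<partial>PL {1..n})"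
proof -
  let ?P = "{\<sigma>. \<sigma> permutes {1..n}}"
  define f where "f x = indicator {y. OS n y} x * ennreal (Fc n r s m x)" for x
  have [measurable]: "Fc n r s m \<in> borel_measurable (PL {1..n})" by (rule Fc_meas)
  have [measurable]: "(\<lambda>x. indicator {y. OS n y} x :: ennreal) \<in> borel_measurable (PL {1..n})" by (rule OS_meas)
  have fm[measurable]: "f \<in> borel_measurable (PL {1..n})" unfolding f_def by measurable
  have fpm: "(\<lambda>x. f (pm n \<sigma> x)) \<in> borel_measurable (PL {1..n})" if "\<sigma> \<in> ?P" for \<sigma>
    using measurable_comp[OF pm_meas fm, of \<sigma>] that by (simp add: comp_def)
  have "(\<integral>\<^sup>+x. indicator {x. \<forall>i\<in>{1..n}. x i \<in> {0..1}} x * ennreal (Fc n r s m x) \<partial>PL {1..n})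
      = (\<integral>\<^sup>+x. (\<Sum>\<sigma>\<in>?P. f (pm n \<sigma> x)) \<partial>PL {1..n})"
  proof (rule nn_integral_cong_AE)
    show "AE x in PL {1..n}. indicator {x. \<forall>i\<in>{1..n}. x i \<in> {0..1}} x * ennreal (Fc n r s m x) = (\<Sum>\<sigma>\<in>?P. f (pm n \<sigma> x))"
      using AE_generic
    proof eventually_elim
      case (elim x)
      have "indicator {x. \<forall>i\<in>{1..n}. x i \<in> {0..1}} x * ennreal (Fc n r s m x)
          = (\<Sum>\<sigma>\<in>?P. indicator {y. OS n y} (pm n \<sigma> x)) * ennreal (Fc n r s m x)"
        using count_perm[of x n] elim by simp
      also have "\<dots> = (\<Sum>\<sigma>\<in>?P. indicator {y. OS n y} (pm n \<sigma> x) * ennreal (Fc n r s m x))"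
        by (simp add: sum_distrib_right)
      also have "\<dots> = (\<Sum>\<sigma>\<in>?P. f (pm n \<sigma> x))"
        by (rule sum.cong) (auto simp: f_def Fc_perm)
      finally show ?case .
    qed
  qed
  also have "\<dots> = (\<Sum>\<sigma>\<in>?P. (\<integral>\<^sup>+x. f (pm n \<sigma> x) \<partial>PL {1..n}))"
    by (rule nn_integral_sum) (rule fpm)
  also have "\<dots> = (\<Sum>\<sigma>\<in>?P. (\<integral>\<^sup>+x. f x \<partial>PL {1..n}))"
  proof (rule sum.cong[OF refl])
    fix \<sigma> assume "\<sigma> \<in> ?P"
    then have "bij_betw \<sigma> {1..n} {1..n}" by (simp add: permutes_imp_bij)
    then show "(\<integral>\<^sup>+x. f (pm n \<sigma> x) \<partial>PL {1..n}) = (\<integral>\<^sup>+x. f x \<partial>PL {1..n})"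
      unfolding pm_def by (rule PL_reindex) (simp, rule fm)
  qed
  also have "\<dots> = of_nat (card ?P) * (\<integral>\<^sup>+x. f x \<partial>PL {1..n})" by simp
  also have "\<dots> = ennreal (fact n) * (\<integral>\<^sup>+x. f x \<partial>PL {1..n})"
    using card_permutations[of "{1..n}" n] by (simp add: ennreal_of_nat_eq_real_of_nat)
  finally show ?thesis unfolding f_def .
qed

lemma chain_lt:
  fixes y :: "nat \<Rightarrow> real"
  assumes "\<forall>i\<in>{1..<n}. y (i-1) < y i"
  shows "a < b \<Longrightarrow> b < n \<Longrightarrow> y a < y b"
proof (induction b)
  case 0 then show ?case by simp
next
  case (Suc b)
  have step: "y b < y (Suc b)" using assms Suc.prems by force
  show ?case
  proof (cases "a < b")
    case True then show ?thesis using Suc step by simp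
  next
    case False then have "a = b" using Suc.prems by simp
    then show ?thesis using step by simp
  qed
qed

lemma shift_Hf:
  assumes n: "n > 0"
  shows "indicator {y. OS n y} (\<lambda>i\<in>{1..n}. y (i - 1)) * ennreal (Fc n r s m (\<lambda>i\<in>{1..n}. y (i - 1))) = Hf n r s m y"
proof -
  let ?z = "\<lambda>i\<in>{1..n}. y (i - 1)"
  have reg: "OS n ?z \<longleftrightarrow> (0 < y 0 \<and> (\<forall>i\<in>{1..<n}. y (i-1) < y i) \<and> y (n-1) < 1)"
  proof
    assume A: "OS n ?z"
    have a1: "0 < y 0" using A n unfolding OS_def by (metis atLeastAtMost_iff diff_self_eq_0 le_refl less_one linorder_not_le restrict_apply')
    have a2: "y (i-1) < y i" if "i \<in> {1..<n}" for i
    proof -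
      have B: "\<forall>i\<in>{1..n}. \<forall>j\<in>{1..n}. i < j \<longrightarrow> ?z i < ?z j" using A unfolding OS_def by blast
      have "i \<in> {1..n}" "Suc i \<in> {1..n}" "i < Suc i" using that by auto
      then have "?z i < ?z (Suc i)" using B by blast
      then show ?thesis using that by simp
    qed
    have a3: "y (n-1) < 1" using A n unfolding OS_def by auto
    show "0 < y 0 \<and> (\<forall>i\<in>{1..<n}. y (i-1) < y i) \<and> y (n-1) < 1" using a1 a2 a3 by blast
  next
    assume A: "0 < y 0 \<and> (\<forall>i\<in>{1..<n}. y (i-1) < y i) \<and> y (n-1) < 1"
    have lt: "a < b \<Longrightarrow> b < n \<Longrightarrow> y a < y b" for a b using chain_lt[of n y a b] A by blast
    have le: "a \<le> b \<Longrightarrow> b < n \<Longrightarrow> y a \<le> y b" for a b using lt[of a b] by (cases "a = b") auto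
    have b1: "0 < y (i-1) \<and> y (i-1) < 1" if "i \<in> {1..n}" for i
    proof -
      have h: "i - 1 < n" "i - 1 \<le> n - 1" "n - 1 < n" using that n by auto
      then have "y 0 \<le> y (i-1)" "y (i-1) \<le> y (n-1)" using le by auto
      then show ?thesis using A by auto
    qed
    have b2: "y (i-1) < y (j-1)" if "i \<in> {1..n}" "j \<in> {1..n}" "i < j" for i j
      using lt[of "i-1" "j-1"] that by auto
    show "OS n ?z" unfolding OS_def using b1 b2 by auto
  qed
  show ?thesis
  proof (cases "OS n ?z")
    case False
    then show ?thesis using reg by (simp add: Hf_def indicator_def)
  next
    case True
    then have A: "0 < y 0 \<and> (\<forall>i\<in>{1..<n}. y (i-1) < y i) \<and> y (n-1) < 1" using reg by simp
    have lt: "a < b \<Longrightarrow> b < n \<Longrightarrow> y a < y b" for a b using chain_lt[of n y a b] A by blast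
    have p1: "(\<Prod>i\<in>{1..n}. ?z i ^ r * (1 - ?z i) ^ s) = (\<Prod>i\<in>{1..n}. y (i-1) ^ r * (1 - y (i-1)) ^ s)"
      by (rule prod.cong) auto
    have p2: "(\<Prod>(i, j)\<in>pairs n. \<bar>?z i - ?z j\<bar> ^ m) = (\<Prod>(i, j)\<in>pairs n. (y (j-1) - y (i-1)) ^ m)"
    proof (rule prod.cong[OF refl])
      fix p assume "p \<in> pairs n"
      then obtain i j where ij: "p = (i, j)" "1 \<le> i" "i < j" "j \<le> n" by (auto simp: pairs_def)
      then have "y (i-1) < y (j-1)" using lt[of "i-1" "j-1"] by auto
      then show "(case p of (i, j) \<Rightarrow> \<bar>?z i - ?z j\<bar> ^ m) = (case p of (i, j) \<Rightarrow> (y (j-1) - y (i-1)) ^ m)"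
        using ij by simp
    qed
    show ?thesis using True A unfolding Fc_def p1 p2 Hf_def by (simp add: indicator_def)
  qed
qed

lemma shift_integral:
  assumes n: "n > 0"
  shows "(\<integral>\<^sup>+x. indicator {y. OS n y} x * ennreal (Fc n r s m x) \<partial>PL {1..n}) = (\<integral>\<^sup>+y. Hf n r s m y \<partial>PL {0..<n})"
proof -
  have [measurable]: "Fc n r s m \<in> borel_measurable (PL {1..n})" by (rule Fc_meas)
  have [measurable]: "(\<lambda>x. indicator {y. OS n y} x :: ennreal) \<in> borel_measurable (PL {1..n})" by (rule OS_meas)
  have fm: "(\<lambda>x. indicator {y. OS n y} x * ennreal (Fc n r s m x)) \<in> borel_measurable (PL {1..n})" by measurable
  have bij: "bij_betw (\<lambda>i. i - 1) {1..n} {0..<n}"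
    by (rule bij_betw_byWitness[where f'="\<lambda>i. i + 1"]) auto
  have "(\<integral>\<^sup>+x. indicator {y. OS n y} x * ennreal (Fc n r s m x) \<partial>PL {1..n})
      = (\<integral>\<^sup>+y. indicator {y. OS n y} (\<lambda>i\<in>{1..n}. y (i - 1)) * ennreal (Fc n r s m (\<lambda>i\<in>{1..n}. y (i - 1))) \<partial>PL {0..<n})"
    using PL_reindex[OF bij _ fm] by simp
  also have "\<dots> = (\<integral>\<^sup>+y. Hf n r s m y \<partial>PL {0..<n})"
    using shift_Hf[OF n] by simp
  finally show ?thesis .
qed

lemma card_pairs: "card (pairs n) = n * (n - 1) div 2"
proof (induction n)
  case 0
  have "pairs 0 = {}" by (auto simp: pairs_def)
  then show ?case by simp
next
  case (Suc n)
  have e: "pairs (Suc n) = pairs n \<union> (\<lambda>i. (i, Suc n)) ` {1..n}"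
    by (auto simp: pairs_def le_Suc_eq)
  have d: "pairs n \<inter> (\<lambda>i. (i, Suc n)) ` {1..n} = {}" by (auto simp: pairs_def)
  have "card (pairs (Suc n)) = card (pairs n) + n"
    unfolding e by (subst card_Un_disjoint) (use d in \<open>auto simp: card_image inj_on_def pairs_def[of "Suc n"]\<close>)
  also have "\<dots> = n * (n - 1) div 2 + n" using Suc by simp
  also have "\<dots> = Suc n * (Suc n - 1) div 2"
  proof (cases n)
    case 0 then show ?thesis by simp
  next
    case (Suc k)
    then show ?thesis by (simp add: algebra_simps)
  qed
  finally show ?case .
qed

lemma gU_zero: "x n \<le> 0 \<Longrightarrow> gU n r s m x = 0"
proof -
  assume xn: "x n \<le> 0"
  have "\<not> (0 < x 0 \<and> (\<forall>i\<in>{1..n}. x (i-1) < x i))"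
  proof
    assume A: "0 < x 0 \<and> (\<forall>i\<in>{1..n}. x (i-1) < x i)"
    then have "x 0 \<le> x n" using chain_le[of n x n] by auto
    then show False using A xn by simp
  qed
  then show ?thesis by (simp add: gU_def indicator_def)
qed

theorem proposition4p13:
  fixes n r s m :: nat
  assumes "n > 0"
  shows "(\<integral>\<^sup>+ t. indicator {t. \<forall>k\<in>{0..n}. 0 < t k} t *
            ennreal ((\<Prod>i\<in>{1..n}. (\<Sum>k\<in>{0..<i}. t k) ^ r * (\<Sum>k\<in>{i..n}. t k) ^ s) *
                     (\<Prod>(i, j)\<in>{(i, j). 1 \<le> i \<and> i < j \<and> j \<le> n}. (\<Sum>k\<in>{i..<j}. t k) ^ m) *
                     exp (- (\<Sum>k\<in>{0..n}. t k)))
          \<partial>(Pi\<^sub>M {0..n} (\<lambda>_. lborel)))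
       = ennreal (fact ((r + s + 1) * n + m * n * (n - 1) div 2) / fact n) *
         (\<integral>\<^sup>+ x. indicator {x. \<forall>i\<in>{1..n}. x i \<in> {0..1}} x *
            ennreal ((\<Prod>i\<in>{1..n}. x i ^ r * (1 - x i) ^ s) *
                     (\<Prod>(i, j)\<in>{(i, j). 1 \<le> i \<and> i < j \<and> j \<le> n}. \<bar>x i - x j\<bar> ^ m))
          \<partial>(Pi\<^sub>M {1..n} (\<lambda>_. lborel)))"
proof -
  have n: "n > 0" by (rule assms)
  define N where "N = (r + s + 1) * n + m * card (pairs n)"
  have NN: "(r + s + 1) * n + m * n * (n - 1) div 2 = N"
  proof -
    have ev: "even (n * (n - 1))" by (cases "even n") auto
    have "m * n * (n - 1) div 2 = m * (n * (n - 1) div 2)"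
      using ev by (simp add: div_mult_swap mult.assoc)
    then show ?thesis unfolding N_def card_pairs by simp
  qed
  have L1: "(\<integral>\<^sup>+ t. indicator {t. \<forall>k\<in>{0..n}. 0 < t k} t *
            ennreal ((\<Prod>i\<in>{1..n}. (\<Sum>k\<in>{0..<i}. t k) ^ r * (\<Sum>k\<in>{i..n}. t k) ^ s) *
                     (\<Prod>(i, j)\<in>{(i, j). 1 \<le> i \<and> i < j \<and> j \<le> n}. (\<Sum>k\<in>{i..<j}. t k) ^ m) *
                     exp (- (\<Sum>k\<in>{0..n}. t k)))
          \<partial>(Pi\<^sub>M {0..n} (\<lambda>_. lborel))) = (\<integral>\<^sup>+t. fL n r s m t \<partial>PL {0..n})"
    unfolding fL_def pairs_def ..
  also have "\<dots> = (\<integral>\<^sup>+t. gU n r s m (Ssh n t) \<partial>PL {0..n})"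
    by (simp add: fL_gU)
  also have "\<dots> = (\<integral>\<^sup>+t. gU n r s m t \<partial>PL {0..n})"
    by (rule shear_all[OF gU_meas order.refl])
  also have "\<dots> = (\<integral>\<^sup>+t. gU n r s m (Tsc n n t) * ennreal (t n ^ n) \<partial>PL {0..n})"
    by (rule scale_all[OF gU_meas _ order.refl, symmetric]) (rule gU_zero)
  also have "\<dots> = (\<integral>\<^sup>+y. ennreal (y n ^ N * exp (- y n)) * indicator {0..} (y n) * Hf n r s m y \<partial>PL {0..n})"
    unfolding N_def by (simp add: gU_Tsc[OF n])
  also have "\<dots> = ennreal (fact N) * (\<integral>\<^sup>+y. Hf n r s m y \<partial>PL {0..<n})"
    by (rule gamma_split[OF n])
  finally have LHS: "(\<integral>\<^sup>+ t. indicator {t. \<forall>k\<in>{0..n}. 0 < t k} t *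
            ennreal ((\<Prod>i\<in>{1..n}. (\<Sum>k\<in>{0..<i}. t k) ^ r * (\<Sum>k\<in>{i..n}. t k) ^ s) *
                     (\<Prod>(i, j)\<in>{(i, j). 1 \<le> i \<and> i < j \<and> j \<le> n}. (\<Sum>k\<in>{i..<j}. t k) ^ m) *
                     exp (- (\<Sum>k\<in>{0..n}. t k)))
          \<partial>(Pi\<^sub>M {0..n} (\<lambda>_. lborel))) = ennreal (fact N) * (\<integral>\<^sup>+y. Hf n r s m y \<partial>PL {0..<n})" .
  have "(\<integral>\<^sup>+ x. indicator {x. \<forall>i\<in>{1..n}. x i \<in> {0..1}} x *
            ennreal ((\<Prod>i\<in>{1..n}. x i ^ r * (1 - x i) ^ s) *
                     (\<Prod>(i, j)\<in>{(i, j). 1 \<le> i \<and> i < j \<and> j \<le> n}. \<bar>x i - x j\<bar> ^ m))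
          \<partial>(Pi\<^sub>M {1..n} (\<lambda>_. lborel)))
      = (\<integral>\<^sup>+x. indicator {x. \<forall>i\<in>{1..n}. x i \<in> {0..1}} x * ennreal (Fc n r s m x) \<partial>PL {1..n})"
    unfolding Fc_def pairs_def ..
  also have "\<dots> = ennreal (fact n) * (\<integral>\<^sup>+x. indicator {y. OS n y} x * ennreal (Fc n r s m x) \<partial>PL {1..n})"
    by (rule symm)
  also have "\<dots> = ennreal (fact n) * (\<integral>\<^sup>+y. Hf n r s m y \<partial>PL {0..<n})"
    unfolding shift_integral[OF n] ..
  finally have RHS: "(\<integral>\<^sup>+ x. indicator {x. \<forall>i\<in>{1..n}. x i \<in> {0..1}} x *
            ennreal ((\<Prod>i\<in>{1..n}. x i ^ r * (1 - x i) ^ s) *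
                     (\<Prod>(i, j)\<in>{(i, j). 1 \<le> i \<and> i < j \<and> j \<le> n}. \<bar>x i - x j\<bar> ^ m))
          \<partial>(Pi\<^sub>M {1..n} (\<lambda>_. lborel))) = ennreal (fact n) * (\<integral>\<^sup>+y. Hf n r s m y \<partial>PL {0..<n})" .
  have fr: "ennreal (fact N / fact n) * ennreal (fact n) = ennreal (fact N)"
  proof -
    have "(fact n :: real) > 0" by simp
    then have "fact N / fact n * fact n = (fact N :: real)" by simp
    then show ?thesis by (simp add: ennreal_mult'[symmetric])
  qed
  show ?thesis unfolding LHS RHS NN
    by (simp add: mult.assoc[symmetric] fr)
qed

end
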